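(* Let $\mathsf{M}=(E,\mathcal{L})$ be a loopless matroid. For any subset $S\subseteq E$, with $\rho_S:A^*(\mathsf{M}|_S)\to A^*(\mathsf{M})$ the homomorphism defined by $\rho_S(D_G)=\sum_{G'\in\mathcal{L}^*,\ G\subseteq G'\subseteq G\cup(E\setminus S)}D_{G'}$, we have \[ \rho_S(\psi_0)=\psi_0-\sum_{G\in\mathcal{L}^*,\ G\subseteq E\setminus S} D_{G}\qquad\text{and}\qquad\rho_S(\psi_\infty)=\psi_\infty-\sum_{G\in\mathcal{L}^*,\ G\supseteq S} D_{G}, \] where on the left $\psi_0,\psi_\infty$ are the classes of $\mathsf{M}|_S$ and on the right those of $\mathsf{M}$. In particular, if $F\in\mathcal{L}^*$ is a proper flat, then \[ \psi_F^-=\rho_F(\psi_\infty)\qquad\text{and}\qquad\psi_F^+=\rho_{E\setminus F}(\psi_0). \]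
   Context: A matroid $\mathsf{M}=(E,\mathcal{L})$ consists of a finite ground set $E$ and a collection $\mathcal{L}\subseteq 2^E$ of flats such that (1) the intersection of two flats is a flat, and (2) for every flat $F$, every element of $E\setminus F$ lies in exactly one flat minimal among flats strictly containing $F$. It is loopless if $\emptyset\in\mathcal{L}$. Write $\mathcal{L}^*=\mathcal{L}\setminus\{\emptyset,E\}$. The restriction $\mathsf{M}|_S$ is the matroid on ground set $S$ with flats $\{F\cap S\mid F\in\mathcal{L}\}$. For a loopless matroid $\mathsf{N}=(E',\mathcal{L}')$, the Chow ring is $A^*(\mathsf{N})=\mathbb{Z}[X_F\mid F\in\mathcal{L}'^*]/(\mathcal{I}+\mathcal{J})$, where $\mathcal{L}'^*=\mathcal{L}'\setminus\{\emptyset,E'\}$, $\mathcal{I}$ is generated by $X_{F_1}X_{F_2}$ for incomparable $F_1,F_2$, and $\mathcal{J}$ by $\sum_{F\in\mathcal{L}'^*,\,e\in F}X_F-\sum_{F\in\mathcal{L}'^*,\,f\in F}X_F$ for $e,f\in E'$; $D_F$ is the class of $X_F$. The map $\rho_S$ is a well-defined ring homomorphism. For any flat $F\in\mathcal{L}'$ and any $e\in E'$, $\psi_F^-=\sum_{G\in\mathcal{L}'^*,\ e\in G}D_G-\sum_{G\in\mathcal{L}'^*,\ G\supseteq F}D_G$ and $\psi_F^+=\sum_{G\in\mathcal{L}'^*,\ e\notin G}D_G-\sum_{G\in\mathcal{L}'^*,\ G\subseteq F}D_G$ (independent of $e$); $\psi_0=\psi_\emptyset^+=\sum_{G\in\mathcal{L}'^*,\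 e\notin G}D_G$ and $\psi_\infty=\psi_{E'}^-=\sum_{G\in\mathcal{L}'^*,\ e\in G}D_G$. *)

theory Defs
  imports Main "HOL-Library.Poly_Mapping"
begin

definition matroid :: "'a set \<Rightarrow> 'a set set \<Rightarrow> bool" where
  "matroid E L \<longleftrightarrow> finite E \<and> L \<subseteq> Pow E
     \<and> (\<forall>F1\<in>L. \<forall>F2\<in>L. F1 \<inter> F2 \<in> L)
     \<and> (\<forall>F\<in>L. \<forall>x\<in>E - F. \<exists>!G. G \<in> L \<and> F \<subset> G
            \<and> (\<nexists>H. H \<in> L \<and> F \<subset> H \<and> H \<subset> G) \<and> x \<in> G)"

definition loopless :: "'a set \<Rightarrow> 'a set set \<Rightarrow> bool" where
  "loopless E L \<longleftrightarrow> matroid E L \<and> {} \<in> L"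

definition restr_flats :: "'a set set \<Rightarrow> 'a set \<Rightarrow> 'a set set" where
  "restr_flats L S = {F \<inter> S | F. F \<in> L}"

definition Lstar :: "'a set \<Rightarrow> 'a set set \<Rightarrow> 'a set set" where
  "Lstar E L = L - {{}, E}"

type_synonym 'a mpoly = "('a set \<Rightarrow>\<^sub>0 nat) \<Rightarrow>\<^sub>0 int"

definition Var :: "'a set \<Rightarrow> 'a mpoly" where
  "Var F = Poly_Mapping.single (Poly_Mapping.single F 1) 1"

inductive_set gen_ideal :: "'r::comm_ring_1 set \<Rightarrow> 'r set" for B where
  base: "g \<in> B \<Longrightarrow> g \<in> gen_ideal B"
| zero: "0 \<in> gen_ideal B"
| add: "a \<in> gen_ideal B \<Longrightarrow> b \<in> gen_ideal B \<Longrightarrow> a + b \<in> gen_ideal B"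
| mult: "a \<in> gen_ideal B \<Longrightarrow> r * a \<in> gen_ideal B"

definition chow_gens :: "'a set \<Rightarrow> 'a set set \<Rightarrow> 'a mpoly set" where
  "chow_gens E L =
     {Var F1 * Var F2 | F1 F2. F1 \<in> Lstar E L \<and> F2 \<in> Lstar E L
                              \<and> \<not> F1 \<subseteq> F2 \<and> \<not> F2 \<subseteq> F1}
   \<union> {(\<Sum>F\<in>{F\<in>Lstar E L. e \<in> F}. Var F) - (\<Sum>F\<in>{F\<in>Lstar E L. f \<in> F}. Var F)
       | e f. e \<in> E \<and> f \<in> E}"

definition chow_eq :: "'a set \<Rightarrow> 'a set set \<Rightarrow> 'a mpoly \<Rightarrow> 'a mpoly \<Rightarrow> bool" where
  "chow_eq E L p q \<longleftrightarrow> p - q \<in> gen_ideal (chow_gens E L)"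

section \<open>Psi classes (representatives; e is the auxiliary element)\<close>

definition psi0 :: "'a set \<Rightarrow> 'a set set \<Rightarrow> 'a \<Rightarrow> 'a mpoly" where
  "psi0 E L e = (\<Sum>G\<in>{G\<in>Lstar E L. e \<notin> G}. Var G)"

definition psi_inf :: "'a set \<Rightarrow> 'a set set \<Rightarrow> 'a \<Rightarrow> 'a mpoly" where
  "psi_inf E L e = (\<Sum>G\<in>{G\<in>Lstar E L. e \<in> G}. Var G)"

definition psi_minus :: "'a set \<Rightarrow> 'a set set \<Rightarrow> 'a set \<Rightarrow> 'a \<Rightarrow> 'a mpoly" where
  "psi_minus E L F e = (\<Sum>G\<in>{G\<in>Lstar E L. e \<in> G}. Var G) - (\<Sum>G\<in>{G\<in>Lstar E L. F \<subseteq> G}. Var G)"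

definition psi_plus :: "'a set \<Rightarrow> 'a set set \<Rightarrow> 'a set \<Rightarrow> 'a \<Rightarrow> 'a mpoly" where
  "psi_plus E L F e = (\<Sum>G\<in>{G\<in>Lstar E L. e \<notin> G}. Var G) - (\<Sum>G\<in>{G\<in>Lstar E L. G \<subseteq> F}. Var G)"

definition subst_mon :: "('a set \<Rightarrow> 'a mpoly) \<Rightarrow> ('a set \<Rightarrow>\<^sub>0 nat) \<Rightarrow> 'a mpoly" where
  "subst_mon \<sigma> mon = (\<Prod>G\<in>Poly_Mapping.keys mon. (\<sigma> G) ^ (Poly_Mapping.lookup mon G))"

definition subst :: "('a set \<Rightarrow> 'a mpoly) \<Rightarrow> 'a mpoly \<Rightarrow> 'a mpoly" where
  "subst \<sigma> p = (\<Sum>mon\<in>Poly_Mapping.keys p. of_int (Poly_Mapping.lookup p mon) * subst_mon \<sigma> mon)"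

definition rho_img :: "'a set \<Rightarrow> 'a set set \<Rightarrow> 'a set \<Rightarrow> 'a set \<Rightarrow> 'a mpoly" where
  "rho_img E L S G = (\<Sum>G'\<in>{G'\<in>Lstar E L. G \<subseteq> G' \<and> G' \<subseteq> G \<union> (E - S)}. Var G')"

definition rho :: "'a set \<Rightarrow> 'a set set \<Rightarrow> 'a set \<Rightarrow> 'a mpoly \<Rightarrow> 'a mpoly" where
  "rho E L S p = subst (rho_img E L S) p"

end

theory Submission
  imports Defs
begin

lemma subst_superset:
  assumes "finite K" "Poly_Mapping.keys p \<subseteq> K"
  shows "subst \<sigma> p = (\<Sum>mon\<in>K. of_int (Poly_Mapping.lookup p mon) * subst_mon \<sigma> mon)"
  unfolding subst_def
  by (rule sum.mono_neutral_left[OF assms]) (auto simp: in_keys_iff)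

lemma subst_add: "subst \<sigma> (p + q) = subst \<sigma> p + subst \<sigma> q"
proof -
  let ?K = "Poly_Mapping.keys p \<union> Poly_Mapping.keys q"
  let ?m = "subst_mon \<sigma>"
  have f: "finite ?K" by simp
  have k: "Poly_Mapping.keys (p + q) \<subseteq> ?K" by (rule keys_add)
  have 1: "subst \<sigma> (p + q) = (\<Sum>mon\<in>?K. of_int (Poly_Mapping.lookup (p+q) mon) * ?m mon)"
    by (rule subst_superset[OF f k])
  have 2: "subst \<sigma> p = (\<Sum>mon\<in>?K. of_int (Poly_Mapping.lookup p mon) * ?m mon)"
    by (rule subst_superset[OF f]) blast
  have 3: "subst \<sigma> q = (\<Sum>mon\<in>?K. of_int (Poly_Mapping.lookup q mon) * ?m mon)"
    by (rule subst_superset[OF f]) blast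
  have 4: "of_int (Poly_Mapping.lookup (p+q) mon) * ?m mon
      = of_int (Poly_Mapping.lookup p mon) * ?m mon + of_int (Poly_Mapping.lookup q mon) * ?m mon" for mon
    unfolding lookup_add of_int_add distrib_right ..
  show ?thesis unfolding 1 2 3 4 by (rule sum.distrib)
qed

lemma subst_zero: "subst \<sigma> 0 = 0"
  by (simp add: subst_def)

lemma subst_Var: "subst \<sigma> (Var G) = \<sigma> G"
  by (simp add: subst_def Var_def subst_mon_def lookup_single)

lemma subst_sum_Var: "subst \<sigma> (\<Sum>G\<in>T. Var G) = (\<Sum>G\<in>T. \<sigma> G)"
proof (induction T rule: infinite_finite_induct)
  case (infinite A) then show ?case by (simp add: subst_zero)
next
  case empty then show ?case by (simp add: subst_zero)
next
  case (insert x F) then show ?case by (simp add: subst_add subst_Var)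
qed

lemma split_sum:
  assumes "finite A"
  shows "(\<Sum>x\<in>A. g x) = (\<Sum>x\<in>{x\<in>A. P x}. g x) + (\<Sum>x\<in>{x\<in>A. \<not> P x}. g x)"
proof -
  have "A = {x\<in>A. P x} \<union> {x\<in>A. \<not> P x}" by blast
  then have "(\<Sum>x\<in>A. g x) = (\<Sum>x\<in>{x\<in>A. P x} \<union> {x\<in>A. \<not> P x}. g x)" by simp
  also have "\<dots> = (\<Sum>x\<in>{x\<in>A. P x}. g x) + (\<Sum>x\<in>{x\<in>A. \<not> P x}. g x)"
    by (rule sum.union_disjoint) (use assms in auto)
  finally show ?thesis .
qed

lemma finite_Lstar: assumes "loopless E L" shows "finite (Lstar E L)"
proof -
  have "finite E" "L \<subseteq> Pow E" using assms by (auto simp: loopless_def matroid_def)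
  then show ?thesis unfolding Lstar_def by (meson finite_Diff finite_Pow_iff rev_finite_subset)
qed

lemma LstarE: assumes "loopless E L" "G \<in> Lstar E L" shows "G \<subseteq> E" "G \<in> L" "G \<noteq> {}" "G \<noteq> E"
  using assms by (auto simp: loopless_def matroid_def Lstar_def)

lemma regroup:
  assumes ll: "loopless E L" and SE: "S \<subseteq> E" and PQ: "\<And>G'. G' \<in> Lstar E L \<Longrightarrow> Q G' = P (G' \<inter> S)"
  shows "(\<Sum>G\<in>{G\<in>Lstar S (restr_flats L S). P G}. rho_img E L S G)
       = (\<Sum>G'\<in>{G'\<in>Lstar E L. Q G' \<and> G' \<inter> S \<noteq> {} \<and> G' \<inter> S \<noteq> S}. Var G')"
proof -
  let ?T = "{G\<in>Lstar S (restr_flats L S). P G}"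
  let ?Src = "{G'\<in>Lstar E L. Q G' \<and> G' \<inter> S \<noteq> {} \<and> G' \<inter> S \<noteq> S}"
  have fL: "finite (Lstar E L)" by (rule finite_Lstar[OF ll])
  have fS: "finite ?Src" using fL by simp
  have "finite (restr_flats L S)"
  proof -
    have "finite L" using ll by (auto simp: loopless_def matroid_def intro: rev_finite_subset)
    moreover have "restr_flats L S = (\<lambda>F. F \<inter> S) ` L" by (auto simp: restr_flats_def)
    ultimately show ?thesis by simp
  qed
  then have fT: "finite ?T" by (simp add: Lstar_def)
  have img: "(\<lambda>G'. G' \<inter> S) ` ?Src \<subseteq> ?T"
  proof
    fix y assume "y \<in> (\<lambda>G'. G' \<inter> S) ` ?Src"
    then obtain x where x: "x \<in> ?Src" "y = x \<inter> S" by blast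
    have "x \<in> L" using LstarE[OF ll] x by blast
    then have "y \<in> restr_flats L S" using x by (auto simp: restr_flats_def)
    moreover have "P y" using PQ x by auto
    ultimately show "y \<in> ?T" using x by (auto simp: Lstar_def)
  qed
  have "(\<Sum>G\<in>?T. rho_img E L S G) = (\<Sum>G\<in>?T. \<Sum>G'\<in>{x. x \<in> ?Src \<and> x \<inter> S = G}. Var G')"
  proof (rule sum.cong[OF refl])
    fix G assume G: "G \<in> ?T"
    then have GS: "G \<subseteq> S" "G \<noteq> {}" "G \<noteq> S" "P G" by (auto simp: Lstar_def restr_flats_def)
    have "{G'\<in>Lstar E L. G \<subseteq> G' \<and> G' \<subseteq> G \<union> (E - S)} = {x. x \<in> ?Src \<and> x \<inter> S = G}"
    proof (intro set_eqI iffI)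
      fix x assume x: "x \<in> {G'\<in>Lstar E L. G \<subseteq> G' \<and> G' \<subseteq> G \<union> (E - S)}"
      then have "x \<inter> S = G" using GS by blast
      then show "x \<in> {x. x \<in> ?Src \<and> x \<inter> S = G}" using x GS PQ by auto
    next
      fix x assume x: "x \<in> {x. x \<in> ?Src \<and> x \<inter> S = G}"
      then have "x \<subseteq> E" using LstarE[OF ll] by auto
      then show "x \<in> {G'\<in>Lstar E L. G \<subseteq> G' \<and> G' \<subseteq> G \<union> (E - S)}" using x by auto
    qed
    then show "rho_img E L S G = (\<Sum>G'\<in>{x. x \<in> ?Src \<and> x \<inter> S = G}. Var G')"
      by (simp add: rho_img_def)
  qed
  also have "\<dots> = (\<Sum>G'\<in>?Src. Var G')"
    by (rule sum.group[OF fS fT img])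
  finally show ?thesis .
qed

lemma part_psi0:
  assumes ll: "loopless E L" and SE: "S \<subseteq> E" and e: "e \<in> S"
  shows "rho E L S (psi0 S (restr_flats L S) e)
     = psi0 E L e - (\<Sum>G\<in>{G\<in>Lstar E L. G \<subseteq> E - S}. Var G)"
proof -
  have fL: "finite (Lstar E L)" by (rule finite_Lstar[OF ll])
  have "rho E L S (psi0 S (restr_flats L S) e)
      = (\<Sum>G\<in>{G\<in>Lstar S (restr_flats L S). e \<notin> G}. rho_img E L S G)"
    by (simp add: rho_def psi0_def subst_sum_Var)
  also have "\<dots> = (\<Sum>G'\<in>{G'\<in>Lstar E L. e \<notin> G' \<and> G' \<inter> S \<noteq> {} \<and> G' \<inter> S \<noteq> S}. Var G')"
    by (rule regroup[OF ll SE]) (use e in blast)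
  also have "{G'\<in>Lstar E L. e \<notin> G' \<and> G' \<inter> S \<noteq> {} \<and> G' \<inter> S \<noteq> S}
      = {G'\<in>{G\<in>Lstar E L. e \<notin> G}. \<not> G' \<subseteq> E - S}"
    using e LstarE[OF ll] by blast
  also have "{G\<in>Lstar E L. G \<subseteq> E - S} = {G'\<in>{G\<in>Lstar E L. e \<notin> G}. G' \<subseteq> E - S}"
    using e by blast
  ultimately show ?thesis
    using split_sum[of "{G\<in>Lstar E L. e \<notin> G}" Var "\<lambda>G'. G' \<subseteq> E - S"] fL
    by (simp add: psi0_def)
qed

lemma part_psi_inf:
  assumes ll: "loopless E L" and SE: "S \<subseteq> E" and e: "e \<in> S"
  shows "rho E L S (psi_inf S (restr_flats L S) e)
     = psi_inf E L e - (\<Sum>G\<in>{G\<in>Lstar E L. S \<subseteq> G}. Var G)"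
proof -
  have fL: "finite (Lstar E L)" by (rule finite_Lstar[OF ll])
  have "rho E L S (psi_inf S (restr_flats L S) e)
      = (\<Sum>G\<in>{G\<in>Lstar S (restr_flats L S). e \<in> G}. rho_img E L S G)"
    by (simp add: rho_def psi_inf_def subst_sum_Var)
  also have "\<dots> = (\<Sum>G'\<in>{G'\<in>Lstar E L. e \<in> G' \<and> G' \<inter> S \<noteq> {} \<and> G' \<inter> S \<noteq> S}. Var G')"
    by (rule regroup[OF ll SE]) (use e in blast)
  also have "{G'\<in>Lstar E L. e \<in> G' \<and> G' \<inter> S \<noteq> {} \<and> G' \<inter> S \<noteq> S}
      = {G'\<in>{G\<in>Lstar E L. e \<in> G}. \<not> S \<subseteq> G'}"
    using e by blast
  also have "{G\<in>Lstar E L. S \<subseteq> G} = {G'\<in>{G\<in>Lstar E L. e \<in> G}. S \<subseteq> G'}"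
    using e by blast
  ultimately show ?thesis
    using split_sum[of "{G\<in>Lstar E L. e \<in> G}" Var "\<lambda>G'. S \<subseteq> G'"] fL
    by (simp add: psi_inf_def)
qed

lemma J_mem:
  assumes "e \<in> E" "f \<in> E"
  shows "(\<Sum>F\<in>{F\<in>Lstar E L. e \<in> F}. Var F) - (\<Sum>F\<in>{F\<in>Lstar E L. f \<in> F}. Var F)
         \<in> gen_ideal (chow_gens E L)"
  by (rule gen_ideal.base) (use assms in \<open>auto simp: chow_gens_def\<close>)

lemma neg_mem: "a \<in> gen_ideal B \<Longrightarrow> - a \<in> gen_ideal B"
  using gen_ideal.mult[of a B "-1"] by simp

lemma chow_eq_sym: "chow_eq E L p q \<Longrightarrow> chow_eq E L q p"
  unfolding chow_eq_def using neg_mem by fastforce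

lemma psi_inf_eq:
  assumes "e \<in> E" "f \<in> E"
  shows "chow_eq E L (psi_inf E L e - Z) (psi_inf E L f - Z)"
  using J_mem[OF assms, of L] by (simp add: chow_eq_def psi_inf_def)

lemma psi0_eq:
  assumes ll: "loopless E L" and "e \<in> E" "f \<in> E"
  shows "chow_eq E L (psi0 E L e - Z) (psi0 E L f - Z)"
proof -
  have fL: "finite (Lstar E L)" by (rule finite_Lstar[OF ll])
  have "psi0 E L x = (\<Sum>G\<in>Lstar E L. Var G) - (\<Sum>G\<in>{G\<in>Lstar E L. x \<in> G}. Var G)" for x
    using split_sum[OF fL, of Var "\<lambda>G. x \<in> G"] by (simp add: psi0_def)
  then have "psi0 E L e - Z - (psi0 E L f - Z)
     = - ((\<Sum>F\<in>{F\<in>Lstar E L. e \<in> F}. Var F) - (\<Sum>F\<in>{F\<in>Lstar E L. f \<in> F}. Var F))"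
    by simp
  then show ?thesis unfolding chow_eq_def using neg_mem[OF J_mem[OF assms(2,3), of L]] by simp
qed

theorem proposition3p7:
  fixes E :: "'a set" and L :: "'a set set"
  assumes "loopless E L"
  shows "(\<forall>S e f. S \<subseteq> E \<and> e \<in> S \<and> f \<in> E \<longrightarrow>
            chow_eq E L (rho E L S (psi0 S (restr_flats L S) e))
                        (psi0 E L f - (\<Sum>G\<in>{G\<in>Lstar E L. G \<subseteq> E - S}. Var G))
          \<and> chow_eq E L (rho E L S (psi_inf S (restr_flats L S) e))
                        (psi_inf E L f - (\<Sum>G\<in>{G\<in>Lstar E L. S \<subseteq> G}. Var G)))
       \<and> (\<forall>F e f f'. F \<in> Lstar E L \<and> e \<in> E \<and> f \<in> F \<and> f' \<in> E - F \<longrightarrow>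
            chow_eq E L (psi_minus E L F e) (rho E L F (psi_inf F (restr_flats L F) f))
          \<and> chow_eq E L (psi_plus E L F e) (rho E L (E - F) (psi0 (E - F) (restr_flats L (E - F)) f')))"
proof (intro conjI allI impI)
  fix S e f assume h: "S \<subseteq> E \<and> e \<in> S \<and> f \<in> E"
  then have eE: "e \<in> E" by blast
  show "chow_eq E L (rho E L S (psi0 S (restr_flats L S) e))
                        (psi0 E L f - (\<Sum>G\<in>{G\<in>Lstar E L. G \<subseteq> E - S}. Var G))"
    using part_psi0[OF assms, of S e] psi0_eq[OF assms eE, of f] h by simp
  show "chow_eq E L (rho E L S (psi_inf S (restr_flats L S) e))
                        (psi_inf E L f - (\<Sum>G\<in>{G\<in>Lstar E L. S \<subseteq> G}. Var G))"
    using part_psi_inf[OF assms, of S e] psi_inf_eq[OF eE, of f] h by simp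
next
  fix F e f f' assume h: "F \<in> Lstar E L \<and> e \<in> E \<and> f \<in> F \<and> f' \<in> E - F"
  have FE: "F \<subseteq> E" using LstarE[OF assms] h by blast
  have fE: "f \<in> E" using FE h by blast
  show "chow_eq E L (psi_minus E L F e) (rho E L F (psi_inf F (restr_flats L F) f))"
    using part_psi_inf[OF assms FE, of f] psi_inf_eq[OF h[THEN conjunct2, THEN conjunct1] fE,
        of L "\<Sum>G\<in>{G\<in>Lstar E L. F \<subseteq> G}. Var G"] h
    by (simp add: psi_minus_def psi_inf_def)
  have EF: "E - (E - F) = F" using FE by blast
  have "chow_eq E L (psi0 E L e - (\<Sum>G\<in>{G\<in>Lstar E L. G \<subseteq> F}. Var G))
                    (psi0 E L f' - (\<Sum>G\<in>{G\<in>Lstar E L. G \<subseteq> F}. Var G))"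
    using psi0_eq[OF assms] h by blast
  then show "chow_eq E L (psi_plus E L F e) (rho E L (E - F) (psi0 (E - F) (restr_flats L (E - F)) f'))"
    using part_psi0[OF assms, of "E - F" f'] h EF
    by (simp add: psi_plus_def psi0_def)
qed

end
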